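(* Let $(\Omega,T)$ be a minimal subshift over a finite alphabet $A$ such that no word in $L_5(\Omega)$ has repeated letters, and suppose the language $L(\Omega)$ is recursive. Then: (1) there is an algorithm which, given $w,v\in L(\Omega)$ and $i,j\in\mathbb Z$, decides whether $(v,j)\subseteq(w,i)$; (2) there is an algorithm which, given $w,v\in L(\Omega)$ and $i,j\in\mathbb Z$, decides whether $(w,i)$ and $(v,j)$ are $3$-disjoint; (3) for every $w\in L(\Omega)$ and $i\in\mathbb Z$, the set of cylinder partitions of $(w,i)$ is a recursive subset of $\mathcal{FS}(A^*\times\mathbb Z)$, the set of all finite subsets of $A^*\times\mathbb Z$.
   Context: $T$ is the left shift $(T\omega)_m=\omega_{m+1}$ on $A^{\mathbb Z}$; a minimal subshift is a closed shift-invariant $\Omega\subseteq A^{\mathbb Z}$ with every orbit dense. $A^*$ is the set of nonempty finite words over $A$, indexed from $0$: $w=w_0\cdots w_{|w|-1}$. $L_m(\Omega)$ is the set of words of length $m$ occurring in sequences of $\Omega$ and $L(\Omega)=\bigcup_m L_m(\Omega)$; it is recursive if membership is algorithmically decidable. For a word $v$ and $i\in\mathbb Z$, $(v,i)=\{\omega\in\Omega:\omega_{k-i}=v_k,\ 0\leq k\leq|v|-1\}$. A finite set $S\subseteq A^*\times\mathbb Z$ is a cylinder partition of $(w,i)$ if the sets $(s,k)$, $(s,k)\in S$, are cylinder sets (with $s\in L(\Omega)$) that are pairwise disjoint and have union $(w,i)$. Two clopen sets $U,V$ are $3$-disjoint if $(U\cup TU\cup T^2U)\cap(V\cup TV\cup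 T^2V)=\emptyset$. *)

theory Defs
  imports Main "HOL-Library.Nat_Bijection" "HOL-Library.Disjoint_Sets"
begin

text \<open>Codes of partial recursive functions on lists of naturals.  Argument
  lists may have any length; missing arguments are read as 0.\<close>

datatype recf = Zr | Sc | Proj nat | Comp recf "recf list" | Prim recf recf | Mn recf

definition arg :: "nat list \<Rightarrow> nat \<Rightarrow> nat" where
  "arg xs i = (if i < length xs then xs ! i else 0)"

inductive eval :: "recf \<Rightarrow> nat list \<Rightarrow> nat \<Rightarrow> bool" where
  eval_Zr: "eval Zr xs 0"
| eval_Sc: "eval Sc xs (Suc (arg xs 0))"
| eval_Proj: "eval (Proj i) xs (arg xs i)"
| eval_Comp: "\<lbrakk> length ys = length gs; \<forall>k<length gs. eval (gs ! k) xs (ys ! k); eval f ys y \<rbrakk>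
      \<Longrightarrow> eval (Comp f gs) xs y"
| eval_Prim_Nil: "eval f [] y \<Longrightarrow> eval (Prim f g) [] y"
| eval_Prim_0: "eval f xs y \<Longrightarrow> eval (Prim f g) (0 # xs) y"
| eval_Prim_Suc: "\<lbrakk> eval (Prim f g) (n # xs) r; eval g (n # r # xs) y \<rbrakk>
      \<Longrightarrow> eval (Prim f g) (Suc n # xs) y"
| eval_Mn: "\<lbrakk> eval f (n # xs) 0; \<forall>m<n. \<exists>k. eval f (m # xs) (Suc k) \<rbrakk>
      \<Longrightarrow> eval (Mn f) xs n"

definition decides :: "recf \<Rightarrow> nat list set \<Rightarrow> (nat list \<Rightarrow> bool) \<Rightarrow> bool" where
  "decides f D P \<longleftrightarrow> (\<forall>xs\<in>D. eval f xs (if P xs then 1 else 0))"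

definition word_code :: "('a \<Rightarrow> nat) \<Rightarrow> 'a list \<Rightarrow> nat" where
  "word_code e w = list_encode (map e w)"

definition pair_code :: "('a \<Rightarrow> nat) \<Rightarrow> 'a list \<times> int \<Rightarrow> nat" where
  "pair_code e p = prod_encode (word_code e (fst p), int_encode (snd p))"

definition fset_code :: "('a \<Rightarrow> nat) \<Rightarrow> ('a list \<times> int) set \<Rightarrow> nat" where
  "fset_code e S = set_encode (pair_code e ` S)"

definition shift :: "(int \<Rightarrow> 'a) \<Rightarrow> (int \<Rightarrow> 'a)" ("T") where
  "T \<omega> = (\<lambda>m. \<omega> (m + 1))"

text \<open>Closedness in the product (of discrete) topology on \<open>A\<^sup>\<int>\<close>, written out.\<close>
definition closed_seqs :: "(int \<Rightarrow> 'a) set \<Rightarrow> bool" where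
  "closed_seqs \<Omega> \<longleftrightarrow>
     (\<forall>\<omega>. (\<forall>N::nat. \<exists>\<omega>'\<in>\<Omega>. \<forall>m. \<bar>m\<bar> \<le> int N \<longrightarrow> \<omega>' m = \<omega> m) \<longrightarrow> \<omega> \<in> \<Omega>)"

text \<open>Every (two-sided) orbit is dense: the point \<open>T\<^sup>n \<omega>\<close> (\<open>n \<in> \<int>\<close>) is
  \<open>\<lambda>m. \<omega> (m + n)\<close>.\<close>
definition minimal_subshift :: "(int \<Rightarrow> 'a) set \<Rightarrow> bool" where
  "minimal_subshift \<Omega> \<longleftrightarrow> \<Omega> \<noteq> {} \<and> closed_seqs \<Omega> \<and> T ` \<Omega> = \<Omega> \<and>
     (\<forall>\<omega>\<in>\<Omega>. \<forall>\<omega>'\<in>\<Omega>. \<forall>N::nat. \<exists>n::int.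
        \<forall>m. \<bar>m\<bar> \<le> int N \<longrightarrow> \<omega> (m + n) = \<omega>' m)"

definition Lm :: "(int \<Rightarrow> 'a) set \<Rightarrow> nat \<Rightarrow> 'a list set" where
  "Lm \<Omega> m = {w. length w = m \<and> (\<exists>\<omega>\<in>\<Omega>. \<exists>k::int. \<forall>i<m. \<omega> (k + int i) = w ! i)}"

definition Lang :: "(int \<Rightarrow> 'a) set \<Rightarrow> 'a list set" where
  "Lang \<Omega> = (\<Union>m\<in>{1..}. Lm \<Omega> m)"

definition cyl :: "(int \<Rightarrow> 'a) set \<Rightarrow> 'a list \<Rightarrow> int \<Rightarrow> (int \<Rightarrow> 'a) set" where
  "cyl \<Omega> v i = {\<omega>\<in>\<Omega>. \<forall>k<length v. \<omega> (int k - i) = v ! k}"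

definition three_disjoint :: "(int \<Rightarrow> 'a) set \<Rightarrow> (int \<Rightarrow> 'a) set \<Rightarrow> bool" where
  "three_disjoint U V \<longleftrightarrow>
     (U \<union> T ` U \<union> T ` T ` U) \<inter> (V \<union> T ` V \<union> T ` T ` V) = {}"

definition cylinder_partition ::
  "(int \<Rightarrow> 'a) set \<Rightarrow> ('a list \<times> int) set \<Rightarrow> 'a list \<Rightarrow> int \<Rightarrow> bool" where
  "cylinder_partition \<Omega> S w i \<longleftrightarrow> finite S \<and>
     (\<forall>(s,k)\<in>S. s \<in> Lang \<Omega>) \<and>
     disjoint_family_on (\<lambda>(s,k). cyl \<Omega> s k) S \<and>
     (\<Union>(s,k)\<in>S. cyl \<Omega> s k) = cyl \<Omega> w i"

end

theory Submission
  imports Defs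
begin

definition dep :: "nat \<Rightarrow> (nat list \<Rightarrow> nat) \<Rightarrow> bool" where
  "dep n g \<longleftrightarrow> (\<forall>xs ys. (\<forall>k<n. arg xs k = arg ys k) \<longrightarrow> g xs = g ys)"

definition computable :: "(nat list \<Rightarrow> nat) \<Rightarrow> bool" where
  "computable g \<longleftrightarrow> (\<exists>f. \<forall>xs. eval f xs (g xs)) \<and> (\<exists>n. dep n g)"

lemma dep_mono: "dep n g \<Longrightarrow> n \<le> m \<Longrightarrow> dep m g"
  unfolding dep_def by auto

lemma arg_Cons0[simp]: "arg (x#xs) 0 = x" by (simp add: arg_def)
lemma arg_Cons_Suc[simp]: "arg (x#xs) (Suc k) = arg xs k" by (simp add: arg_def)
lemma arg_tl: "arg (tl xs) k = arg xs (Suc k)"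
  by (cases xs) (auto simp: arg_def)
lemma arg_Nil[simp]: "arg [] k = 0" by (simp add: arg_def)

lemma c_zero: "computable (\<lambda>xs. 0)"
  unfolding computable_def dep_def by (blast intro: eval_Zr)
lemma c_sc: "computable (\<lambda>xs. Suc (arg xs 0))"
  unfolding computable_def dep_def by (blast intro: eval_Sc)
lemma c_arg: "computable (\<lambda>xs. arg xs i)"
  unfolding computable_def dep_def by (blast intro: eval_Proj)

lemma progs_exist: "\<forall>g\<in>set gs. computable g \<Longrightarrow>
   \<exists>fs N. length fs = length gs \<and> (\<forall>k<length gs. \<forall>xs. eval (fs!k) xs ((gs!k) xs)) \<and> (\<forall>g\<in>set gs. dep N g)"
proof (induction gs)
  case Nil then show ?case by auto
next
  case (Cons g gs)
  then obtain fs N where fs: "length fs = length gs" "\<forall>k<length gs. \<forall>xs. eval (fs!k) xs ((gs!k) xs)"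
      "\<forall>g\<in>set gs. dep N g" by auto
  from Cons.prems obtain f n where f: "\<forall>xs. eval f xs (g xs)" "dep n g" unfolding computable_def by auto
  show ?case
    apply (rule exI[of _ "f#fs"])
    apply (rule exI[of _ "N+n"])
    using fs f by (auto simp: nth_Cons split: nat.split intro: dep_mono)
qed

lemma c_comp: "computable h \<Longrightarrow> \<forall>g\<in>set gs. computable g \<Longrightarrow>
   computable (\<lambda>xs. h (map (\<lambda>g. g xs) gs))"
proof -
  assume h: "computable h" and gs: "\<forall>g\<in>set gs. computable g"
  from h obtain fh where fh: "\<forall>xs. eval fh xs (h xs)" unfolding computable_def by auto
  from progs_exist[OF gs] obtain fs N where fs: "length fs = length gs" "\<forall>k<length gs. \<forall>xs. eval (fs!k) xs ((gs!k) xs)"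
     "\<forall>g\<in>set gs. dep N g" by auto
  have "\<forall>xs. eval (Comp fh fs) xs (h (map (\<lambda>g. g xs) gs))"
    using fs fh by (auto intro!: eval_Comp)
  moreover have "dep N (\<lambda>xs. h (map (\<lambda>g. g xs) gs))"
    using fs(3) unfolding dep_def
    by (metis (mono_tags, lifting) map_eq_conv)
  ultimately show ?thesis unfolding computable_def by blast
qed

lemma c_comp1: "computable (\<lambda>xs. F (arg xs 0)) \<Longrightarrow> computable g \<Longrightarrow> computable (\<lambda>xs. F (g xs))"
  using c_comp[of "\<lambda>xs. F (arg xs 0)" "[g]"] by simp
lemma c_comp2: "computable (\<lambda>xs. F (arg xs 0) (arg xs 1)) \<Longrightarrow> computable g1 \<Longrightarrow> computable g2 \<Longrightarrow>
  computable (\<lambda>xs. F (g1 xs) (g2 xs))"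
  using c_comp[of "\<lambda>xs. F (arg xs 0) (arg xs 1)" "[g1,g2]"] by (simp add: numeral_eq_Suc)
lemma c_comp3: "computable (\<lambda>xs. F (arg xs 0) (arg xs 1) (arg xs 2)) \<Longrightarrow> computable g1 \<Longrightarrow> computable g2 \<Longrightarrow>
  computable g3 \<Longrightarrow> computable (\<lambda>xs. F (g1 xs) (g2 xs) (g3 xs))"
  using c_comp[of "\<lambda>xs. F (arg xs 0) (arg xs 1) (arg xs 2)" "[g1,g2,g3]"] by (simp add: numeral_eq_Suc)

lemma arg_map_upt: "k < n \<Longrightarrow> arg (map f [0..<n]) k = f k"
  by (simp add: arg_def)

lemma c_tl: assumes "computable g" shows "computable (\<lambda>ys. g (tl ys))"
proof -
  from assms obtain n where n: "dep n g" unfolding computable_def by auto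
  have eq: "g (tl ys) = g (map (\<lambda>h. h ys) (map (\<lambda>k ys. arg ys (Suc k)) [0..<n]))" for ys
  proof -
    have "\<forall>k<n. arg (tl ys) k = arg (map (\<lambda>k. arg ys (Suc k)) [0..<n]) k"
      by (simp add: arg_map_upt arg_tl)
    then show ?thesis using n unfolding dep_def by (simp add: comp_def)
  qed
  show ?thesis unfolding eq by (rule c_comp[OF assms]) (auto intro: c_arg)
qed

lemma c_cons: assumes "computable h" "computable g" shows "computable (\<lambda>xs. h (g xs # xs))"
proof -
  from assms obtain n where n: "dep n h" unfolding computable_def by auto
  have eq: "h (g xs # xs) = h (map (\<lambda>h. h xs) (g # map (\<lambda>k xs. arg xs k) [0..<n]))" for xs
  proof -
    have "\<forall>k<n. arg (g xs # xs) k = arg (g xs # map (\<lambda>k. arg xs k) [0..<n]) k"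
      by (auto simp: arg_map_upt arg_def nth_Cons split: nat.split)
    then show ?thesis using n unfolding dep_def by (simp add: comp_def)
  qed
  show ?thesis unfolding eq by (rule c_comp[OF assms(1)]) (auto intro: c_arg assms(2))
qed

fun PR :: "(nat list \<Rightarrow> nat) \<Rightarrow> (nat list \<Rightarrow> nat) \<Rightarrow> nat \<Rightarrow> nat list \<Rightarrow> nat" where
  "PR b s 0 ys = b ys"
| "PR b s (Suc n) ys = s (n # PR b s n ys # ys)"

lemma c_prim: "computable b \<Longrightarrow> computable s \<Longrightarrow> computable (\<lambda>xs. PR b s (arg xs 0) (tl xs))"
proof -
  assume "computable b" "computable s"
  then obtain fb fs nb ns where fb: "\<forall>xs. eval fb xs (b xs)" and fs: "\<forall>xs. eval fs xs (s xs)"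
    and db: "dep nb b" and ds: "dep ns s"
    unfolding computable_def by auto
  have n: "eval (Prim fb fs) (n#ys) (PR b s n ys)" for n ys
    by (induction n) (auto intro: eval_Prim_0 eval_Prim_Suc fb[rule_format] fs[rule_format])
  have "eval (Prim fb fs) xs (PR b s (arg xs 0) (tl xs))" for xs
    by (cases xs) (auto intro: eval_Prim_Nil fb[rule_format] n)
  moreover have pr: "PR b s n ys1 = PR b s n ys2" if "\<forall>k<nb+ns. arg ys1 k = arg ys2 k" for n ys1 ys2
  proof (induction n)
    case 0 then show ?case using db that unfolding dep_def by auto
  next
    case (Suc n)
    have "\<forall>k<ns. arg (n # PR b s n ys1 # ys1) k = arg (n # PR b s n ys2 # ys2) k"
    proof (intro allI impI)
      fix k assume "k < ns"
      show "arg (n # PR b s n ys1 # ys1) k = arg (n # PR b s n ys2 # ys2) k"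
      proof (cases k)
        case (Suc k') then show ?thesis
          using that Suc.IH \<open>k < ns\<close> by (cases k') auto
      qed simp
    qed
    then show ?case using ds unfolding dep_def by simp
  qed
  have "dep (Suc (nb+ns)) (\<lambda>xs. PR b s (arg xs 0) (tl xs))"
    unfolding dep_def
  proof (intro allI impI)
    fix xs ys :: "nat list" assume a: "\<forall>k<Suc (nb + ns). arg xs k = arg ys k"
    then have "\<forall>k<nb+ns. arg (tl xs) k = arg (tl ys) k" by (simp add: arg_tl)
    with a show "PR b s (arg xs 0) (tl xs) = PR b s (arg ys 0) (tl ys)" using pr by auto
  qed
  ultimately show ?thesis unfolding computable_def by blast
qed

lemma c_mn: "computable g \<Longrightarrow> (\<And>xs. \<exists>n. g (n#xs) = 0) \<Longrightarrow> computable (\<lambda>xs. LEAST n. g (n#xs) = 0)"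
proof -
  assume "computable g" and ex: "\<And>xs. \<exists>n. g (n#xs) = 0"
  then obtain fg ng where fg: "\<forall>xs. eval fg xs (g xs)" and dg: "dep ng g" unfolding computable_def by auto
  have "eval (Mn fg) xs (LEAST n. g (n#xs) = 0)" for xs
  proof (rule eval_Mn)
    show "eval fg ((LEAST n. g (n#xs) = 0) # xs) 0"
      using fg LeastI_ex[OF ex[of xs]] by metis
    show "\<forall>m<(LEAST n. g (n#xs) = 0). \<exists>k. eval fg (m # xs) (Suc k)"
      using fg not_less_Least by (metis not0_implies_Suc)
  qed
  moreover have "dep ng (\<lambda>xs. LEAST n. g (n#xs) = 0)"
  proof -
    have "g (n#xs) = g (n#ys)" if "\<forall>k<ng. arg xs k = arg ys k" for xs ys n
    proof -
      have "\<forall>k<ng. arg (n#xs) k = arg (n#ys) k"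
      proof (intro allI impI)
        fix k assume "k<ng" then show "arg (n#xs) k = arg (n#ys) k" using that by (cases k) auto
      qed
      then show ?thesis using dg unfolding dep_def by blast
    qed
    note h = this
    show ?thesis unfolding dep_def
    proof (intro allI impI)
      fix xs ys assume "\<forall>k<ng. arg xs k = arg ys k"
      then have "(\<lambda>n. g (n#xs) = 0) = (\<lambda>n. g (n#ys) = 0)" using h[of xs ys] by presburger
      then show "(LEAST n. g (n # xs) = 0) = (LEAST n. g (n # ys) = 0)" by simp
    qed
  qed
  ultimately show ?thesis unfolding computable_def by blast
qed

lemma c_Suc: "computable g \<Longrightarrow> computable (\<lambda>xs. Suc (g xs))"
  by (rule c_comp1[OF c_sc])

lemma c_const: "computable (\<lambda>xs. c)"
  by (induction c) (auto intro: c_zero c_Suc)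

lemma c_rec: assumes "computable (\<lambda>xs. B (arg xs 0))" "computable (\<lambda>xs. S (arg xs 0) (arg xs 1) (arg xs 2))"
  shows "computable (\<lambda>xs. rec_nat (B (arg xs 1)) (\<lambda>n r. S n r (arg xs 1)) (arg xs 0))"
proof -
  have "PR (\<lambda>ys. B (arg ys 0)) (\<lambda>zs. S (arg zs 0) (arg zs 1) (arg zs 2)) n ys
      = rec_nat (B (arg ys 0)) (\<lambda>n r. S n r (arg ys 0)) n" for n ys
    by (induction n) (simp_all add: numeral_2_eq_2)
  then show ?thesis using c_prim[OF assms] by (simp add: arg_tl)
qed

lemma c_rec2: "computable (\<lambda>xs. B (arg xs 0)) \<Longrightarrow> computable (\<lambda>xs. S (arg xs 0) (arg xs 1) (arg xs 2)) \<Longrightarrow>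
   computable g1 \<Longrightarrow> computable g2 \<Longrightarrow>
   computable (\<lambda>xs. rec_nat (B (g2 xs)) (\<lambda>n r. S n r (g2 xs)) (g1 xs))"
  by (rule c_comp2[where F="\<lambda>a y. rec_nat (B y) (\<lambda>n r. S n r y) a", OF c_rec])

lemma add_rec: "y + a = rec_nat y (\<lambda>n r. Suc r) a" by (induct a) simp_all
lemma c_add: assumes "computable g1" "computable g2" shows "computable (\<lambda>xs. g1 xs + g2 xs)"
proof -
  have "computable (\<lambda>xs. rec_nat (g1 xs) (\<lambda>n r. Suc r) (g2 xs))"
    using c_rec2[of "\<lambda>y. y" "\<lambda>n r y. Suc r", OF c_arg c_Suc[OF c_arg] assms(2) assms(1)] by simp
  moreover have "(\<lambda>xs. g1 xs + g2 xs) = (\<lambda>xs. rec_nat (g1 xs) (\<lambda>n r. Suc r) (g2 xs))"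
    by (rule ext) (rule add_rec)
  ultimately show ?thesis by simp
qed

lemma mult_rec: "a * y = rec_nat 0 (\<lambda>n r. r + y) a" by (induct a) simp_all
lemma c_mult: assumes "computable g1" "computable g2" shows "computable (\<lambda>xs. g1 xs * g2 xs)"
proof -
  have "computable (\<lambda>xs. rec_nat 0 (\<lambda>n r. r + g2 xs) (g1 xs))"
    using c_rec2[of "\<lambda>y. 0" "\<lambda>n r y. r + y", OF c_const c_add[OF c_arg c_arg] assms(1) assms(2)] by simp
  moreover have "(\<lambda>xs. g1 xs * g2 xs) = (\<lambda>xs. rec_nat 0 (\<lambda>n r. r + g2 xs) (g1 xs))"
    by (rule ext) (rule mult_rec)
  ultimately show ?thesis by simp
qed

lemma pred_rec: "a - 1 = rec_nat 0 (\<lambda>n r. n) (a::nat)" by (induct a) simp_all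
lemma c_pred: assumes "computable g1" shows "computable (\<lambda>xs. g1 xs - 1)"
proof -
  have "computable (\<lambda>xs. rec_nat 0 (\<lambda>n r. n) (g1 xs))"
    using c_rec2[of "\<lambda>y. 0" "\<lambda>n r y. n", OF c_const c_arg assms(1) c_const] by simp
  moreover have "(\<lambda>xs. g1 xs - 1) = (\<lambda>xs. rec_nat 0 (\<lambda>n r. n) (g1 xs))"
    by (rule ext) (rule pred_rec)
  ultimately show ?thesis by simp
qed

lemma minus_rec: "y - a = rec_nat y (\<lambda>n r. r - 1) (a::nat)" by (induct a) simp_all
lemma c_minus: assumes "computable g1" "computable g2" shows "computable (\<lambda>xs. g1 xs - g2 xs)"
proof -
  have "computable (\<lambda>xs. rec_nat (g1 xs) (\<lambda>n r. r - 1) (g2 xs))"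
    using c_rec2[of "\<lambda>y. y" "\<lambda>n r y. r - 1", OF c_arg c_pred[OF c_arg] assms(2) assms(1)] by simp
  moreover have "(\<lambda>xs. g1 xs - g2 xs) = (\<lambda>xs. rec_nat (g1 xs) (\<lambda>n r. r - 1) (g2 xs))"
    by (rule ext) (rule minus_rec)
  ultimately show ?thesis by simp
qed

lemma pow_rec: "(y::nat) ^ a = rec_nat 1 (\<lambda>n r. r * y) (a::nat)" by (induct a) (auto simp: mult.commute)
lemma c_pow: assumes "computable g1" "computable g2" shows "computable (\<lambda>xs. g1 xs ^ g2 xs)"
proof -
  have "computable (\<lambda>xs. rec_nat 1 (\<lambda>n r. r * g1 xs) (g2 xs))"
    using c_rec2[of "\<lambda>y. 1" "\<lambda>n r y. r * y", OF c_const c_mult[OF c_arg c_arg] assms(2) assms(1)] by simp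
  moreover have "(\<lambda>xs. g1 xs ^ g2 xs) = (\<lambda>xs. rec_nat 1 (\<lambda>n r. r * g1 xs) (g2 xs))"
    by (rule ext) (rule pow_rec)
  ultimately show ?thesis by simp
qed

definition cp :: "(nat list \<Rightarrow> bool) \<Rightarrow> bool" where
  "cp P \<longleftrightarrow> computable (\<lambda>xs. if P xs then (1::nat) else 0)"

lemma cp_eq: assumes "computable g1" "computable g2" shows "cp (\<lambda>xs. g1 xs = g2 xs)"
proof -
  have "(\<lambda>xs. if g1 xs = g2 xs then (1::nat) else 0) = (\<lambda>xs. 1 - ((g1 xs - g2 xs) + (g2 xs - g1 xs)))"
    by auto
  then show ?thesis unfolding cp_def by (simp only:) (intro c_minus c_add c_const assms[unfolded cp_def])
qed

lemma cp_less: assumes "computable g1" "computable g2" shows "cp (\<lambda>xs. g1 xs < g2 xs)"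
proof -
  have "(\<lambda>xs. if g1 xs < g2 xs then (1::nat) else 0) = (\<lambda>xs. 1 - (1 - (g2 xs - g1 xs)))"
    by auto
  then show ?thesis unfolding cp_def by (simp only:) (intro c_minus c_add c_const assms[unfolded cp_def])
qed

lemma cp_le: assumes "computable g1" "computable g2" shows "cp (\<lambda>xs. g1 xs \<le> g2 xs)"
  using cp_less[OF assms(1) c_Suc[OF assms(2)]] by (simp add: less_Suc_eq_le)

lemma cp_not: assumes "cp P" shows "cp (\<lambda>xs. \<not> P xs)"
proof -
  have "(\<lambda>xs. if \<not> P xs then (1::nat) else 0) = (\<lambda>xs. 1 - (if P xs then (1::nat) else 0))"
    by auto
  then show ?thesis unfolding cp_def by (simp only:) (intro c_minus c_const assms[unfolded cp_def])
qed

lemma cp_and: assumes "cp P" "cp Q" shows "cp (\<lambda>xs. P xs \<and> Q xs)"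
proof -
  have "(\<lambda>xs. if P xs \<and> Q xs then (1::nat) else 0) = (\<lambda>xs. (if P xs then (1::nat) else 0) * (if Q xs then (1::nat) else 0))"
    by auto
  then show ?thesis unfolding cp_def by (simp only:) (intro c_mult assms[unfolded cp_def])
qed

lemma cp_or: assumes "cp P" "cp Q" shows "cp (\<lambda>xs. P xs \<or> Q xs)"
proof -
  have "(\<lambda>xs. if P xs \<or> Q xs then (1::nat) else 0) = (\<lambda>xs. 1 - (1 - (if P xs then (1::nat) else 0)) * (1 - (if Q xs then (1::nat) else 0)))"
    by auto
  then show ?thesis unfolding cp_def by (simp only:) (intro c_mult c_minus c_const assms[unfolded cp_def])
qed

lemma cp_imp: assumes "cp P" "cp Q" shows "cp (\<lambda>xs. P xs \<longrightarrow> Q xs)"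
proof -
  have "(\<lambda>xs. if P xs \<longrightarrow> Q xs then (1::nat) else 0) = (\<lambda>xs. 1 - (if P xs then (1::nat) else 0) * (1 - (if Q xs then (1::nat) else 0)))"
    by auto
  then show ?thesis unfolding cp_def by (simp only:) (intro c_mult c_minus c_const assms[unfolded cp_def])
qed

lemma cp_const: "cp (\<lambda>xs. b)"
  unfolding cp_def by (rule c_const)

lemma c_if: assumes "cp P" "computable a" "computable b" shows "computable (\<lambda>xs. if P xs then a xs else b xs)"
proof -
  have "(\<lambda>xs. if P xs then a xs else b xs) = (\<lambda>xs. (if P xs then (1::nat) else 0) * a xs + (1 - (if P xs then (1::nat) else 0)) * b xs)"
    by auto
  then show ?thesis unfolding cp_def by (simp only:) (intro c_mult c_minus c_const c_add assms[unfolded cp_def])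
qed

lemma c_least: assumes "cp (\<lambda>ys. P (arg ys 0) (tl ys))" "\<And>xs. \<exists>y. P y xs"
  shows "computable (\<lambda>xs. LEAST y. P y xs)"
proof -
  have "computable (\<lambda>ys. 1 - (if P (arg ys 0) (tl ys) then (1::nat) else 0))"
    by (intro c_minus c_const assms(1)[unfolded cp_def])
  moreover have ex: "\<And>xs. \<exists>n. (\<lambda>ys. 1 - (if P (arg ys 0) (tl ys) then (1::nat) else 0)) (n#xs) = 0"
    using assms(2) by simp
  ultimately have "computable (\<lambda>xs. LEAST n. (\<lambda>ys. 1 - (if P (arg ys 0) (tl ys) then (1::nat) else 0)) (n#xs) = 0)"
    by (rule c_mn)
  moreover have eq: "\<And>n xs. ((1::nat) - (if P n xs then 1 else 0) = 0) = P n xs" by simp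
  ultimately show ?thesis by (simp only: arg_Cons0 list.sel(3) eq)
qed

lemma ex_less_least: "(\<exists>y<b. Q y) \<longleftrightarrow> (LEAST y. Q y \<or> y = b) < (b::nat)"
proof
  assume "\<exists>y<b. Q y" then obtain y where "y < b" "Q y" by auto
  then have "(LEAST y. Q y \<or> y = b) \<le> y" by (intro Least_le) auto
  then show "(LEAST y. Q y \<or> y = b) < b" using \<open>y<b\<close> by simp
next
  assume a: "(LEAST y. Q y \<or> y = b) < b"
  have "Q (LEAST y. Q y \<or> y = b) \<or> (LEAST y. Q y \<or> y = b) = b" by (rule LeastI[of _ b]) simp
  with a show "\<exists>y<b. Q y" by auto
qed

lemma cp_ex: assumes "cp (\<lambda>ys. P (arg ys 0) (tl ys))" "computable g"
  shows "cp (\<lambda>xs. \<exists>y<g xs. P y xs)"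
proof -
  have l: "computable (\<lambda>xs. LEAST y. P y xs \<or> y = g xs)"
  proof (rule c_least)
    show "cp (\<lambda>ys. P (arg ys 0) (tl ys) \<or> arg ys 0 = g (tl ys))"
      by (intro cp_or assms(1) cp_eq c_arg c_tl[OF assms(2)])
  qed blast
  show ?thesis unfolding ex_less_least by (rule cp_less[OF l assms(2)])
qed

lemma cp_all: assumes "cp (\<lambda>ys. P (arg ys 0) (tl ys))" "computable g"
  shows "cp (\<lambda>xs. \<forall>y<g xs. P y xs)"
proof -
  have "cp (\<lambda>ys. \<not> P (arg ys 0) (tl ys))" by (rule cp_not[OF assms(1)])
  from cp_not[OF cp_ex[where P="\<lambda>y xs. \<not> P y xs", OF this assms(2)]]
  show ?thesis by simp
qed

lemma c_arg_tl1: "computable (\<lambda>xs. arg (tl xs) k)" by (simp add: arg_tl c_arg)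
lemma c_arg_tl2: "computable (\<lambda>xs. arg (tl (tl xs)) k)" by (simp add: arg_tl c_arg)
lemma c_arg_tl3: "computable (\<lambda>xs. arg (tl (tl (tl xs))) k)" by (simp add: arg_tl c_arg)
lemma c_arg_tl4: "computable (\<lambda>xs. arg (tl (tl (tl (tl xs)))) k)" by (simp add: arg_tl c_arg)

lemmas c_intros = c_arg c_const c_Suc c_add c_mult c_minus c_pow c_if c_arg_tl1 c_arg_tl2 c_arg_tl3 c_arg_tl4
  cp_eq cp_less cp_le cp_not cp_and cp_or cp_imp cp_const cp_ex cp_all

lemma div_bound: "b \<noteq> 0 \<Longrightarrow> (a::nat) < b * Suc (a div b)"
  using div_less_iff_less_mult[of b a "Suc (a div b)"] by (simp add: mult.commute)

lemma div_least: "(a::nat) div b = (LEAST q. a < b * Suc q \<or> b = 0)"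
proof (cases "b = 0")
  case True then show ?thesis by simp
next
  case False
  show ?thesis
  proof (rule Least_equality[symmetric])
    show "a < b * Suc (a div b) \<or> b = 0" using False div_bound by simp
    fix q assume "a < b * Suc q \<or> b = 0"
    with False have "a < b * Suc q" by simp
    then have "a div b < Suc q" using False div_less_iff_less_mult[of b a "Suc q"] by (simp add: mult.commute)
    then show "a div b \<le> q" by simp
  qed
qed

lemma c_div: assumes "computable g1" "computable g2" shows "computable (\<lambda>xs. g1 xs div g2 xs)"
proof -
  have "computable (\<lambda>xs. LEAST q. g1 xs < g2 xs * Suc q \<or> g2 xs = 0)"
  proof (rule c_least)
    show "cp (\<lambda>ys. g1 (tl ys) < g2 (tl ys) * Suc (arg ys 0) \<or> g2 (tl ys) = 0)"
      by (intro c_intros c_tl assms)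
    fix xs show "\<exists>q. g1 xs < g2 xs * Suc q \<or> g2 xs = 0"
      using div_bound by blast
  qed
  then show ?thesis by (simp only: div_least)
qed

lemma c_mod: assumes "computable g1" "computable g2" shows "computable (\<lambda>xs. g1 xs mod g2 xs)"
proof -
  have "(\<lambda>xs. g1 xs mod g2 xs) = (\<lambda>xs. g1 xs - g2 xs * (g1 xs div g2 xs))"
    by (simp add: minus_mult_div_eq_mod)
  then show ?thesis using assms by (auto intro!: c_minus c_mult c_div)
qed

lemmas c_intros2 = c_intros c_div c_mod

lemma prod_encode_arith: "prod_encode (a,b) = (a+b) * Suc (a+b) div 2 + a"
  by (simp add: prod_encode_def triangle_def)

lemma fst_decode_least: "fst (prod_decode n) = (LEAST a. \<exists>b<Suc n. (a+b) * Suc (a+b) div 2 + a = n)"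
proof (rule Least_equality[symmetric])
  obtain a b where ab: "prod_decode n = (a,b)" by fastforce
  then have "prod_encode (a,b) = n" by (metis prod_decode_inverse)
  then show "\<exists>b<Suc n. (fst (prod_decode n) + b) * Suc (fst (prod_decode n) + b) div 2 + fst (prod_decode n) = n"
    using ab le_prod_encode_2[of b a] by (auto simp: prod_encode_arith intro!: exI[of _ b])
  fix y assume "\<exists>b<Suc n. (y + b) * Suc (y + b) div 2 + y = n"
  then obtain b where "prod_encode (y,b) = n" by (auto simp: prod_encode_arith)
  then have "prod_decode n = (y,b)" by auto
  then show "fst (prod_decode n) \<le> y" by simp
qed

lemma snd_decode_least: "snd (prod_decode n) = (LEAST b. \<exists>a<Suc n. (a+b) * Suc (a+b) div 2 + a = n)"
proof (rule Least_equality[symmetric])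
  obtain a b where ab: "prod_decode n = (a,b)" by fastforce
  then have "prod_encode (a,b) = n" by (metis prod_decode_inverse)
  then show "\<exists>a<Suc n. (a + snd (prod_decode n)) * Suc (a + snd (prod_decode n)) div 2 + a = n"
    using ab le_prod_encode_1[of a b] by (auto simp: prod_encode_arith intro!: exI[of _ a])
  fix y assume "\<exists>a<Suc n. (a + y) * Suc (a + y) div 2 + a = n"
  then obtain a where "prod_encode (a,y) = n" by (auto simp: prod_encode_arith)
  then have "prod_decode n = (a,y)" by auto
  then show "snd (prod_decode n) \<le> y" by simp
qed

lemma ex_decode: "\<exists>a b. a < Suc n \<and> b < Suc n \<and> (a+b) * Suc (a+b) div 2 + a = n"
proof -
  obtain a b where ab: "prod_decode n = (a,b)" by fastforce
  then have "prod_encode (a,b) = n" by (metis prod_decode_inverse)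
  note e = this
  have "a \<le> n" "b \<le> n" using le_prod_encode_1[of a b] le_prod_encode_2[of b a] e by simp_all
  moreover have "(a+b) * Suc (a+b) div 2 + a = n" using e by (simp only: prod_encode_arith)
  ultimately show ?thesis by (metis less_Suc_eq_le)
qed

lemma c_fstd: assumes "computable g" shows "computable (\<lambda>xs. fst (prod_decode (g xs)))"
proof -
  have "computable (\<lambda>xs. LEAST a. \<exists>b<Suc (arg xs 0). (a+b) * Suc (a+b) div 2 + a = arg xs 0)"
  proof (rule c_least)
    show "cp (\<lambda>ys. \<exists>b<Suc (arg (tl ys) 0). (arg ys 0 + b) * Suc (arg ys 0 + b) div 2 + arg ys 0 = arg (tl ys) 0)"
      by (intro c_intros2)
  qed (use ex_decode in blast)
  then have "computable (\<lambda>xs. fst (prod_decode (arg xs 0)))" by (simp only: fst_decode_least)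
  then show ?thesis by (rule c_comp1[where F="\<lambda>n. fst (prod_decode n)", OF _ assms])
qed

lemma c_sndd: assumes "computable g" shows "computable (\<lambda>xs. snd (prod_decode (g xs)))"
proof -
  have "computable (\<lambda>xs. LEAST b. \<exists>a<Suc (arg xs 0). (a+b) * Suc (a+b) div 2 + a = arg xs 0)"
  proof (rule c_least)
    show "cp (\<lambda>ys. \<exists>a<Suc (arg (tl ys) 0). (a + arg ys 0) * Suc (a + arg ys 0) div 2 + a = arg (tl ys) 0)"
      by (intro c_intros2)
  qed (use ex_decode in blast)
  then have "computable (\<lambda>xs. snd (prod_decode (arg xs 0)))" by (simp only: snd_decode_least)
  then show ?thesis by (rule c_comp1[where F="\<lambda>n. snd (prod_decode n)", OF _ assms])
qed

lemma c_penc: assumes "computable g1" "computable g2" shows "computable (\<lambda>xs. prod_encode (g1 xs, g2 xs))"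
  unfolding prod_encode_arith by (intro c_intros2 assms)

definition tlc :: "nat \<Rightarrow> nat" where "tlc c = snd (prod_decode (c - 1))"
definition hdc :: "nat \<Rightarrow> nat" where "hdc c = fst (prod_decode (c - 1))"
definition tli :: "nat \<Rightarrow> nat \<Rightarrow> nat" where "tli k c = rec_nat c (\<lambda>n r. tlc r) k"
definition nthc :: "nat \<Rightarrow> nat \<Rightarrow> nat" where "nthc c k = hdc (tli k c)"
definition lenc :: "nat \<Rightarrow> nat" where "lenc c = length (list_decode c)"

lemma c_tlc: "computable g \<Longrightarrow> computable (\<lambda>xs. tlc (g xs))"
  unfolding tlc_def by (intro c_sndd c_intros2)
lemma c_hdc: "computable g \<Longrightarrow> computable (\<lambda>xs. hdc (g xs))"
  unfolding hdc_def by (intro c_fstd c_intros2)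
lemma c_tli: assumes "computable g1" "computable g2" shows "computable (\<lambda>xs. tli (g1 xs) (g2 xs))"
  unfolding tli_def
  using c_rec2[of "\<lambda>y. y" "\<lambda>n r y. tlc r", OF c_arg c_tlc[OF c_arg] assms(1) assms(2)] by simp
lemma c_nthc: assumes "computable g1" "computable g2" shows "computable (\<lambda>xs. nthc (g1 xs) (g2 xs))"
  unfolding nthc_def by (intro c_hdc c_tli assms)

lemma prod_decode_0: "prod_decode 0 = (0,0)"
  by (simp add: prod_decode_def prod_decode_aux.simps)

lemma list_decode_tlc: "list_decode (tlc c) = tl (list_decode c)"
proof (cases c)
  case 0 then show ?thesis by (simp add: tlc_def prod_decode_0)
next
  case (Suc n) then show ?thesis by (simp add: tlc_def split: prod.split)
qed

lemma list_decode_tli: "list_decode (tli k c) = drop k (list_decode c)"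
  by (induction k) (simp_all add: tli_def list_decode_tlc drop_Suc tl_drop)

lemma list_decode_eq_Nil: "list_decode x = [] \<longleftrightarrow> x = 0"
  by (cases x) (auto split: prod.split)

lemma nthc_correct: "k < length (list_decode c) \<Longrightarrow> nthc c k = list_decode c ! k"
proof -
  assume k: "k < length (list_decode c)"
  then have "list_decode (tli k c) \<noteq> []" by (simp add: list_decode_tli)
  then have "tli k c \<noteq> 0" by (auto simp: list_decode_eq_Nil)
  then obtain n where n: "tli k c = Suc n" by (cases "tli k c") auto
  have "list_decode (tli k c) = fst (prod_decode n) # list_decode (snd (prod_decode n))"
    unfolding n by (simp split: prod.split)
  moreover have "list_decode (tli k c) = list_decode c ! k # drop (Suc k) (list_decode c)"
    using k by (simp add: list_decode_tli Cons_nth_drop_Suc)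
  ultimately show ?thesis by (simp add: nthc_def hdc_def n)
qed

lemma tli_lenc: "tli (lenc c) c = 0"
proof -
  have "list_decode (tli (lenc c) c) = []" by (simp add: list_decode_tli lenc_def)
  then show "tli (lenc c) c = 0" by (simp add: list_decode_eq_Nil)
qed

lemma lenc_least: "lenc c = (LEAST k. tli k c = 0)"
proof (rule Least_equality[symmetric])
  have "list_decode (tli (lenc c) c) = []" by (simp add: list_decode_tli lenc_def)
  then show "tli (lenc c) c = 0" by (simp add: list_decode_eq_Nil)
  fix y assume "tli y c = 0"
  then have "list_decode (tli y c) = []" by simp
  then have "drop y (list_decode c) = []" by (simp only: list_decode_tli)
  then show "lenc c \<le> y" by (simp add: lenc_def)
qed

lemma c_lenc: assumes "computable g" shows "computable (\<lambda>xs. lenc (g xs))"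
proof -
  have "computable (\<lambda>xs. LEAST k. tli k (arg xs 0) = 0)"
  proof (rule c_least)
    show "cp (\<lambda>ys. tli (arg ys 0) (arg (tl ys) 0) = 0)" by (intro c_intros2 c_tli)
  qed (use tli_lenc in blast)
  then have "computable (\<lambda>xs. lenc (arg xs 0))" by (simp only: lenc_least)
  then show ?thesis by (rule c_comp1[where F="lenc", OF _ assms])
qed

lemma set_decode_less: "y \<in> set_decode n \<Longrightarrow> y < n"
proof -
  assume "y \<in> set_decode n"
  then have "odd (n div 2^y)" by (simp add: set_decode_def)
  then have "n div 2^y \<noteq> 0" by (cases "n div 2^y = 0") auto
  then have "n \<ge> 2^y" using div_greater_zero_iff by auto
  then show "y < n" using less_exp[of y] by linarith
qed

lemma cp_memb: assumes "computable g1" "computable g2" shows "cp (\<lambda>xs. g1 xs \<in> set_decode (g2 xs))"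
proof -
  have "(\<lambda>xs. g1 xs \<in> set_decode (g2 xs)) = (\<lambda>xs. g2 xs div 2 ^ g1 xs mod 2 = 1)"
    by (auto simp: set_decode_def odd_iff_mod_2_eq_one)
  then show ?thesis by (simp, intro c_intros2 assms)
qed

lemma cp_in_finite: assumes "finite A" "computable g" shows "cp (\<lambda>xs. g xs \<in> A)"
  using assms(1)
proof (induction A)
  case empty then show ?case by (simp add: cp_const)
next
  case (insert a A)
  have "cp (\<lambda>xs. g xs = a \<or> g xs \<in> A)" by (intro cp_or insert.IH c_intros2 assms(2))
  then show ?case by simp
qed

definition posf :: "nat \<Rightarrow> nat \<Rightarrow> nat" where
  "posf M I = (if even I then M - I div 2 else M + I div 2 + 1)"

lemma c_posf: assumes "computable g1" "computable g2" shows "computable (\<lambda>xs. posf (g1 xs) (g2 xs))"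
proof -
  have "(\<lambda>xs. posf (g1 xs) (g2 xs)) = (\<lambda>xs. if g2 xs mod 2 = 0 then g1 xs - g2 xs div 2 else g1 xs + g2 xs div 2 + 1)"
    by (auto simp: posf_def)
  then show ?thesis by (simp, intro c_intros2 assms)
qed

lemma posf_correct: "\<bar>i\<bar> \<le> int M \<Longrightarrow> int (posf M (int_encode i)) = int M - i"
  by (auto simp: posf_def int_encode_def sum_encode_def)

lemma int_encode_ge: "\<bar>i\<bar> \<le> int (int_encode i)"
  by (auto simp: int_encode_def sum_encode_def)

lemma list_encode_ge_length: "length xs \<le> list_encode xs"
  by (induction xs) (auto intro: le_trans[OF _ le_prod_encode_2])

lemma comp_partial: assumes "computable h" "\<And>xs. eval f [h xs] (R (h xs))"
  shows "computable (\<lambda>xs. R (h xs))"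
proof -
  from assms(1) obtain fh n where fh: "\<forall>xs. eval fh xs (h xs)" "dep n h" unfolding computable_def by auto
  have "eval (Comp f [fh]) xs (R (h xs))" for xs
    by (rule eval_Comp[where ys="[h xs]"]) (use fh assms(2) in auto)
  moreover have "dep n (\<lambda>xs. R (h xs))" using fh(2) unfolding dep_def by metis
  ultimately show ?thesis unfolding computable_def by blast
qed

definition awc :: "nat \<Rightarrow> nat \<Rightarrow> nat \<Rightarrow> bool" where
  "awc c d U \<longleftrightarrow> d + lenc U \<le> lenc c \<and> (\<forall>t<lenc U. nthc c (d+t) = nthc U t)"

lemma cp_awc: assumes "computable g1" "computable g2" "computable g3"
  shows "cp (\<lambda>xs. awc (g1 xs) (g2 xs) (g3 xs))"
proof -
  have "cp (\<lambda>xs. awc (arg xs 0) (arg xs 1) (arg xs 2))"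
    unfolding awc_def by (intro c_intros2 c_lenc c_nthc)
  then show ?thesis unfolding cp_def
    by (rule c_comp3[where F="\<lambda>a b c. if awc a b c then 1 else 0", OF _ assms])
qed

lemma c_pencf: "computable g \<Longrightarrow> computable (\<lambda>xs. prod_encode (M, g xs))"
  by (intro c_penc c_const)

definition Bd :: "nat \<Rightarrow> nat \<Rightarrow> nat" where
  "Bd M n = Suc (list_encode (replicate n M))"

lemma Bd_rec: "list_encode (replicate n M) = rec_nat 0 (\<lambda>k r. Suc (prod_encode (M, r))) n"
  by (induction n) auto

lemma c_Bd: assumes "computable g" shows "computable (\<lambda>xs. Bd M (g xs))"
proof -
  have "computable (\<lambda>xs. rec_nat 0 (\<lambda>n r. Suc (prod_encode (M, r))) (g xs))"
    using c_rec2[of "\<lambda>y. 0" "\<lambda>n r y. Suc (prod_encode (M, r))", OF c_const c_Suc[OF c_pencf[OF c_arg]] assms c_const]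
    by simp
  then show ?thesis unfolding Bd_def Bd_rec by (rule c_Suc)
qed

lemma prod_encode_mono: "a \<le> a' \<Longrightarrow> b \<le> b' \<Longrightarrow> prod_encode (a,b) \<le> prod_encode (a',b')"
  unfolding prod_encode_arith by (intro add_mono div_le_mono mult_le_mono) auto

lemma list_encode_le: "\<forall>a\<in>set xs. a \<le> M \<Longrightarrow> list_encode xs \<le> list_encode (replicate (length xs) M)"
  by (induction xs) (auto intro: prod_encode_mono)

definition wc where "wc e w = word_code e w"

lemma lenc_wc: "lenc (word_code e x) = length x"
  by (simp add: lenc_def word_code_def)

lemma nthc_wc: "k < length x \<Longrightarrow> nthc (word_code e x) k = e (x!k)"
  by (simp add: nthc_correct word_code_def)

lemma awc_wc: assumes "inj e"
  shows "awc (word_code e x) d (word_code e u) \<longleftrightarrow> d + length u \<le> length x \<and> (\<forall>t<length u. x!(d+t) = u!t)"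
  unfolding awc_def lenc_wc using assms by (auto simp: nthc_wc inj_eq)

definition validc :: "('a \<Rightarrow> nat) \<Rightarrow> nat \<Rightarrow> bool" where
  "validc e c \<longleftrightarrow> (\<forall>k<lenc c. nthc c k \<in> range e)"

lemma validc_iff: "validc e c \<longleftrightarrow> (\<exists>x. c = word_code e x)"
proof
  assume v: "validc e c"
  let ?L = "list_decode c"
  have "\<forall>a\<in>set ?L. a \<in> range e"
    using v unfolding validc_def lenc_def by (auto simp: in_set_conv_nth nthc_correct)
  then have "map e (map (inv e) ?L) = ?L" unfolding map_map
    by (intro map_idI) (auto simp: f_inv_into_f)
  then have "c = word_code e (map (inv e) ?L)" by (simp add: word_code_def)
  then show "\<exists>x. c = word_code e x" ..
next
  assume "\<exists>x. c = word_code e x"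
  then obtain x where "c = word_code e x" by auto
  then show "validc e c" unfolding validc_def by (auto simp: lenc_wc nthc_wc)
qed

lemma cp_validc: assumes "finite (range e)" "computable g" shows "cp (\<lambda>xs. validc e (g xs))"
proof -
  have "cp (\<lambda>xs. validc e (arg xs 0))"
    unfolding validc_def by (intro cp_all cp_in_finite assms(1) c_nthc c_lenc c_intros2)
  then show ?thesis unfolding cp_def
    by (rule c_comp1[where F="\<lambda>a. if validc e a then 1 else 0", OF _ assms(2)])
qed

definition Lc :: "('a \<Rightarrow> nat) \<Rightarrow> 'a list set \<Rightarrow> nat \<Rightarrow> bool" where
  "Lc e L c \<longleftrightarrow> (\<exists>x. c = word_code e x \<and> x \<in> L)"

lemma cp_Lc:
  assumes inj: "inj e" and fin: "finite (range e)"
    and f: "decides f {[word_code e w] | w. True} (\<lambda>xs. \<exists>w. xs = [word_code e w] \<and> w \<in> L)"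
    and g: "computable g"
  shows "cp (\<lambda>xs. Lc e L (g xs))"
proof -
  define san where "san c = (if validc e c then c else 0)" for c
  define R where "R y = (if \<exists>w. [y] = [word_code e w] \<and> w \<in> L then 1 else (0::nat))" for y
  have hs: "computable (\<lambda>xs. san (arg xs 0))"
    unfolding san_def by (intro c_if cp_validc fin c_intros2)
  have vs: "\<exists>x. san c = word_code e x" for c
    unfolding san_def using validc_iff[of e c] by (auto intro: exI[of _ "[]"] simp: word_code_def)
  have ev: "eval f [san (arg xs 0)] (R (san (arg xs 0)))" for xs
  proof -
    obtain x where x: "san (arg xs 0) = word_code e x" using vs by blast
    have "[word_code e x] \<in> {[word_code e w] | w. True}" by blast
    from f[unfolded decides_def, rule_format, OF this]
    show ?thesis unfolding x R_def by simp
  qed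
  have cR: "computable (\<lambda>xs. R (san (arg xs 0)))"
    by (rule comp_partial[OF hs ev])
  have "computable (\<lambda>xs. if validc e (arg xs 0) then R (san (arg xs 0)) else 0)"
    by (intro c_if cp_validc fin c_intros2 cR)
  moreover have "(if validc e c then R (san c) else 0) = (if Lc e L c then 1 else 0)" for c
    unfolding Lc_def R_def san_def using validc_iff[of e c] inj
    by (auto simp: word_code_def inj_map_eq_map list_encode_eq)
  ultimately have "cp (\<lambda>xs. Lc e L (arg xs 0))" unfolding cp_def by simp
  then show ?thesis unfolding cp_def
    by (rule c_comp1[where F="\<lambda>a. if Lc e L a then 1 else 0", OF _ g])
qed

lemma shift1: "T ` \<Omega> = \<Omega> \<Longrightarrow> \<omega> \<in> \<Omega> \<Longrightarrow> (\<lambda>m. \<omega> (m + 1)) \<in> \<Omega>"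
proof -
  assume "T ` \<Omega> = \<Omega>" "\<omega> \<in> \<Omega>"
  then have "T \<omega> \<in> \<Omega>" by blast
  then show ?thesis by (simp add: shift_def)
qed

lemma shiftm1: assumes "T ` \<Omega> = \<Omega>" "\<omega> \<in> \<Omega>" shows "(\<lambda>m. \<omega> (m - 1)) \<in> \<Omega>"
proof -
  from assms obtain \<omega>' where "\<omega>' \<in> \<Omega>" "\<omega> = T \<omega>'" by blast
  then have "(\<lambda>m. \<omega> (m - 1)) = \<omega>'" by (auto simp: shift_def)
  with \<open>\<omega>' \<in> \<Omega>\<close> show ?thesis by simp
qed

lemma shift_nat: assumes "T ` \<Omega> = \<Omega>" shows "\<omega> \<in> \<Omega> \<Longrightarrow> (\<lambda>m. \<omega> (m + int n)) \<in> \<Omega> \<and> (\<lambda>m. \<omega> (m - int n)) \<in> \<Omega>"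
proof (induction n)
  case 0 then show ?case by simp
next
  case (Suc n)
  then have a: "(\<lambda>m. \<omega> (m + int n)) \<in> \<Omega>" "(\<lambda>m. \<omega> (m - int n)) \<in> \<Omega>" by auto
  from shift1[OF assms a(1)] shiftm1[OF assms a(2)] show ?case by (simp add: algebra_simps)
qed

lemma shift_mem: assumes "T ` \<Omega> = \<Omega>" "\<omega> \<in> \<Omega>" shows "(\<lambda>m. \<omega> (m + z)) \<in> \<Omega>"
proof (cases "z \<ge> 0")
  case True
  have "z = int (nat z)" using True by simp
  then obtain n where "z = int n" by blast
  then show ?thesis using shift_nat[OF assms(1) assms(2)] by auto
next
  case False
  have "z = - int (nat (-z))" using False by simp
  then obtain n where "z = - int n" by blast
  then show ?thesis using shift_nat[OF assms(1) assms(2), of n] by simp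
qed

definition restr :: "(int \<Rightarrow> 'a) \<Rightarrow> int \<Rightarrow> nat \<Rightarrow> 'a list" where
  "restr \<omega> P n = map (\<lambda>t. \<omega> (P + int t)) [0..<n]"

lemma restr_Lang: assumes "\<omega> \<in> \<Omega>" "n \<ge> 1" shows "restr \<omega> P n \<in> Lang \<Omega>"
proof -
  have "restr \<omega> P n \<in> Lm \<Omega> n" unfolding Lm_def restr_def using assms(1)
    by (intro CollectI conjI bexI[of _ \<omega>] exI[of _ P]) auto
  then show ?thesis using assms(2) unfolding Lang_def by auto
qed

lemma Lang_len: "x \<in> Lang \<Omega> \<Longrightarrow> length x \<ge> 1"
  unfolding Lang_def Lm_def by auto

lemma Lang_restr: assumes "T ` \<Omega> = \<Omega>" "x \<in> Lang \<Omega>" shows "\<exists>\<omega>\<in>\<Omega>. restr \<omega> P (length x) = x"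
proof -
  from assms(2) obtain \<omega> k where \<omega>: "\<omega> \<in> \<Omega>" "\<forall>i<length x. \<omega> (k + int i) = x ! i"
    unfolding Lang_def Lm_def by auto
  let ?\<omega> = "\<lambda>m. \<omega> (m + (k - P))"
  have "?\<omega> \<in> \<Omega>" by (rule shift_mem[OF assms(1) \<omega>(1)])
  moreover have "restr ?\<omega> P (length x) = x"
    unfolding restr_def using \<omega>(2) by (auto intro!: nth_equalityI simp: algebra_simps)
  ultimately show ?thesis by blast
qed

lemma length_restr[simp]: "length (restr \<omega> P n) = n" by (simp add: restr_def)

lemma forall_words: assumes "T ` \<Omega> = \<Omega>" "n \<ge> 1"
  shows "(\<forall>\<omega>\<in>\<Omega>. \<Phi> (restr \<omega> P n)) \<longleftrightarrow> (\<forall>x\<in>Lang \<Omega>. length x = n \<longrightarrow> \<Phi> x)"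
proof
  assume h: "\<forall>\<omega>\<in>\<Omega>. \<Phi> (restr \<omega> P n)"
  show "\<forall>x\<in>Lang \<Omega>. length x = n \<longrightarrow> \<Phi> x"
  proof (intro ballI impI)
    fix x assume "x \<in> Lang \<Omega>" "length x = n"
    with Lang_restr[OF assms(1), of x P] obtain \<omega> where "\<omega> \<in> \<Omega>" "restr \<omega> P n = x" by auto
    with h show "\<Phi> x" by auto
  qed
next
  assume h: "\<forall>x\<in>Lang \<Omega>. length x = n \<longrightarrow> \<Phi> x"
  show "\<forall>\<omega>\<in>\<Omega>. \<Phi> (restr \<omega> P n)"
  proof
    fix \<omega> assume "\<omega> \<in> \<Omega>"
    then have "restr \<omega> P n \<in> Lang \<Omega>" by (rule restr_Lang[OF _ assms(2)])
    with h show "\<Phi> (restr \<omega> P n)" by simp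
  qed
qed

definition aw :: "'a list \<Rightarrow> nat \<Rightarrow> 'a list \<Rightarrow> bool" where
  "aw x d u \<longleftrightarrow> d + length u \<le> length x \<and> (\<forall>t<length u. x!(d+t) = u!t)"

lemma cyl_restr: assumes "P \<le> -i" "-i + int (length u) \<le> P + int n"
  shows "\<omega> \<in> cyl \<Omega> u i \<longleftrightarrow> \<omega> \<in> \<Omega> \<and> aw (restr \<omega> P n) (nat (-i-P)) u"
proof -
  have "nat (-i-P) + length u \<le> n" using assms by linarith
  moreover have "P + int (nat (- i - P) + t) = int t - i" for t using assms by simp
  ultimately show ?thesis unfolding cyl_def aw_def restr_def by auto
qed

lemma T_cyl: assumes "T ` \<Omega> = \<Omega>" shows "T ` cyl \<Omega> w i = cyl \<Omega> w (i+1)"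
proof
  show "T ` cyl \<Omega> w i \<subseteq> cyl \<Omega> w (i + 1)"
    using assms unfolding cyl_def shift_def by (auto simp: algebra_simps)
next
  show "cyl \<Omega> w (i + 1) \<subseteq> T ` cyl \<Omega> w i"
  proof
    fix \<omega> assume a: "\<omega> \<in> cyl \<Omega> w (i + 1)"
    let ?\<omega> = "\<lambda>m. \<omega> (m + - 1)"
    have "?\<omega> \<in> \<Omega>" using shift_mem[OF assms, of \<omega> "-1"] a unfolding cyl_def by auto
    moreover have "\<forall>k<length w. ?\<omega> (int k - i) = w ! k"
      using a unfolding cyl_def by (auto simp: algebra_simps)
    moreover have "\<omega> = T ?\<omega>" by (simp add: shift_def)
    ultimately show "\<omega> \<in> T ` cyl \<Omega> w i" unfolding cyl_def by blast
  qed
qed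

lemma forall_codes:
  assumes inj: "inj e" and fin: "finite (range e)"
    and phi: "\<And>x. \<Phi>c (word_code e x) = \<Phi> x"
  shows "(\<forall>x\<in>Lang \<Omega>. length x = n \<longrightarrow> \<Phi> x) \<longleftrightarrow>
     (\<forall>c<Bd (Max (range e)) n. lenc c = n \<and> Lc e (Lang \<Omega>) c \<longrightarrow> \<Phi>c c)"
proof
  assume h: "\<forall>x\<in>Lang \<Omega>. length x = n \<longrightarrow> \<Phi> x"
  show "\<forall>c<Bd (Max (range e)) n. lenc c = n \<and> Lc e (Lang \<Omega>) c \<longrightarrow> \<Phi>c c"
    using h unfolding Lc_def by (auto simp: lenc_wc phi)
next
  assume h: "\<forall>c<Bd (Max (range e)) n. lenc c = n \<and> Lc e (Lang \<Omega>) c \<longrightarrow> \<Phi>c c"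
  show "\<forall>x\<in>Lang \<Omega>. length x = n \<longrightarrow> \<Phi> x"
  proof (intro ballI impI)
    fix x assume x: "x \<in> Lang \<Omega>" "length x = n"
    have "\<forall>a\<in>set (map e x). a \<le> Max (range e)" using fin by auto
    from list_encode_le[OF this] have "word_code e x < Bd (Max (range e)) n"
      unfolding Bd_def word_code_def using x(2) by simp
    moreover have "lenc (word_code e x) = n" using x(2) by (simp add: lenc_wc)
    moreover have "Lc e (Lang \<Omega>) (word_code e x)" using x(1) unfolding Lc_def by blast
    ultimately show "\<Phi> x" using h phi by auto
  qed
qed

lemma wc_ge: "length w \<le> word_code e w"
  unfolding word_code_def using list_encode_ge_length[of "map e w"] by simp

lemma posf_nat: "\<bar>i\<bar> \<le> int K \<Longrightarrow> posf K (int_encode i) = nat (- i - (- int K))"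
  using posf_correct[of i K] by simp

lemma aw_awc: "inj e \<Longrightarrow> awc (word_code e x) d (word_code e u) = aw x d u"
  unfolding aw_def by (rule awc_wc)

lemma part1:
  fixes w v :: "'a list" and i j :: int and \<Omega> :: "(int \<Rightarrow> 'a) set"
  assumes inj: "inj e" and fin: "finite (range e)" and TO: "T ` \<Omega> = \<Omega>"
  defines "K \<equiv> word_code e w + word_code e v + int_encode i + int_encode j + 1"
  shows "cyl \<Omega> v j \<subseteq> cyl \<Omega> w i \<longleftrightarrow>
    (\<forall>c<Bd (Max (range e)) (2*K). lenc c = 2*K \<and> Lc e (Lang \<Omega>) c \<longrightarrow>
        awc c (posf K (int_encode j)) (word_code e v) \<longrightarrow> awc c (posf K (int_encode i)) (word_code e w))"
proof -
  define P where "P = - int K"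
  define n where "n = 2*K"
  have bi: "\<bar>i\<bar> \<le> int (int_encode i)" "\<bar>j\<bar> \<le> int (int_encode j)" by (rule int_encode_ge)+
  have bw: "length w \<le> word_code e w" "length v \<le> word_code e v" by (rule wc_ge)+
  have ci: "\<omega> \<in> cyl \<Omega> w i \<longleftrightarrow> \<omega> \<in> \<Omega> \<and> aw (restr \<omega> P n) (posf K (int_encode i)) w" for \<omega>
    using cyl_restr[of P i w n \<omega> \<Omega>] posf_nat[of i K] bi bw unfolding P_def n_def K_def by simp
  have cj: "\<omega> \<in> cyl \<Omega> v j \<longleftrightarrow> \<omega> \<in> \<Omega> \<and> aw (restr \<omega> P n) (posf K (int_encode j)) v" for \<omega>
    using cyl_restr[of P j v n \<omega> \<Omega>] posf_nat[of j K] bi bw unfolding P_def n_def K_def by simp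
  have "cyl \<Omega> v j \<subseteq> cyl \<Omega> w i \<longleftrightarrow>
     (\<forall>\<omega>\<in>\<Omega>. (\<lambda>x. aw x (posf K (int_encode j)) v \<longrightarrow> aw x (posf K (int_encode i)) w) (restr \<omega> P n))"
    using ci cj by auto
  also have "\<dots> \<longleftrightarrow> (\<forall>x\<in>Lang \<Omega>. length x = n \<longrightarrow> (aw x (posf K (int_encode j)) v \<longrightarrow> aw x (posf K (int_encode i)) w))"
    by (rule forall_words[OF TO]) (simp add: n_def K_def)
  also have "\<dots> \<longleftrightarrow> (\<forall>c<Bd (Max (range e)) n. lenc c = n \<and> Lc e (Lang \<Omega>) c \<longrightarrow>
        (awc c (posf K (int_encode j)) (word_code e v) \<longrightarrow> awc c (posf K (int_encode i)) (word_code e w)))"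
    by (rule forall_codes[OF inj fin]) (simp add: aw_awc[OF inj])
  finally show ?thesis unfolding n_def .
qed

lemma all3: "(\<forall>a<(3::nat). Q a) \<longleftrightarrow> Q 0 \<and> Q 1 \<and> Q 2"
  by (auto simp: less_Suc_eq numeral_3_eq_3 numeral_2_eq_2)

lemma three_disjoint_iff:
  assumes TO: "T ` \<Omega> = \<Omega>"
  shows "three_disjoint (cyl \<Omega> w i) (cyl \<Omega> v j) \<longleftrightarrow>
     (\<forall>\<omega>\<in>\<Omega>. \<forall>a<(3::nat). \<forall>b<(3::nat). \<not> (\<omega> \<in> cyl \<Omega> w (i + int a) \<and> \<omega> \<in> cyl \<Omega> v (j + int b)))"
proof -
  have tw: "cyl \<Omega> w i \<union> T ` cyl \<Omega> w i \<union> T ` T ` cyl \<Omega> w i = cyl \<Omega> w (i + int 0) \<union> cyl \<Omega> w (i + int 1) \<union> cyl \<Omega> w (i + int 2)"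
    by (simp add: T_cyl[OF TO] add.assoc)
  have tv: "cyl \<Omega> v j \<union> T ` cyl \<Omega> v j \<union> T ` T ` cyl \<Omega> v j = cyl \<Omega> v (j + int 0) \<union> cyl \<Omega> v (j + int 1) \<union> cyl \<Omega> v (j + int 2)"
    by (simp add: T_cyl[OF TO] add.assoc)
  have sub: "cyl \<Omega> u k \<subseteq> \<Omega>" for u k by (auto simp: cyl_def)
  show ?thesis unfolding three_disjoint_def tw tv all3
    using sub by blast
qed

lemma part2:
  fixes w v :: "'a list" and i j :: int and \<Omega> :: "(int \<Rightarrow> 'a) set"
  assumes inj: "inj e" and fin: "finite (range e)" and TO: "T ` \<Omega> = \<Omega>"
  defines "K \<equiv> word_code e w + word_code e v + int_encode i + int_encode j + 3"
  shows "three_disjoint (cyl \<Omega> w i) (cyl \<Omega> v j) \<longleftrightarrow>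
    (\<forall>c<Bd (Max (range e)) (2*K). lenc c = 2*K \<and> Lc e (Lang \<Omega>) c \<longrightarrow>
        (\<forall>a<3. \<forall>b<3. \<not> (awc c (posf K (int_encode i) - a) (word_code e w) \<and>
                          awc c (posf K (int_encode j) - b) (word_code e v))))"
proof -
  define P where "P = - int K"
  define n where "n = 2*K"
  have bi: "\<bar>i\<bar> \<le> int (int_encode i)" "\<bar>j\<bar> \<le> int (int_encode j)" by (rule int_encode_ge)+
  have bw: "length w \<le> word_code e w" "length v \<le> word_code e v" by (rule wc_ge)+
  have pi: "int (posf K (int_encode i)) = int K - i" using posf_correct[of i K] bi unfolding K_def by simp
  have pj: "int (posf K (int_encode j)) = int K - j" using posf_correct[of j K] bi unfolding K_def by simp
  have ci: "\<omega> \<in> cyl \<Omega> w (i + int a) \<longleftrightarrow> \<omega> \<in> \<Omega> \<and> aw (restr \<omega> P n) (posf K (int_encode i) - a) w" if "a < 3" for \<omega> a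
  proof -
    have "nat (- (i + int a) - P) = posf K (int_encode i) - a" using pi that bi unfolding P_def K_def by linarith
    then show ?thesis
      using cyl_restr[of P "i + int a" w n \<omega> \<Omega>] bi bw that unfolding P_def n_def K_def by simp
  qed
  have cj: "\<omega> \<in> cyl \<Omega> v (j + int b) \<longleftrightarrow> \<omega> \<in> \<Omega> \<and> aw (restr \<omega> P n) (posf K (int_encode j) - b) v" if "b < 3" for \<omega> b
  proof -
    have "nat (- (j + int b) - P) = posf K (int_encode j) - b" using pj that bi unfolding P_def K_def by linarith
    then show ?thesis
      using cyl_restr[of P "j + int b" v n \<omega> \<Omega>] bi bw that unfolding P_def n_def K_def by simp
  qed
  have "three_disjoint (cyl \<Omega> w i) (cyl \<Omega> v j) \<longleftrightarrow>
     (\<forall>\<omega>\<in>\<Omega>. (\<lambda>x. \<forall>a<(3::nat). \<forall>b<(3::nat). \<not> (aw x (posf K (int_encode i) - a) w \<and> aw x (posf K (int_encode j) - b) v)) (restr \<omega> P n))"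
    unfolding three_disjoint_iff[OF TO] using ci cj by auto
  also have "\<dots> \<longleftrightarrow> (\<forall>x\<in>Lang \<Omega>. length x = n \<longrightarrow> (\<forall>a<(3::nat). \<forall>b<(3::nat). \<not> (aw x (posf K (int_encode i) - a) w \<and> aw x (posf K (int_encode j) - b) v)))"
    by (rule forall_words[OF TO]) (simp add: n_def K_def)
  also have "\<dots> \<longleftrightarrow> (\<forall>c<Bd (Max (range e)) n. lenc c = n \<and> Lc e (Lang \<Omega>) c \<longrightarrow>
        (\<forall>a<3. \<forall>b<3. \<not> (awc c (posf K (int_encode i) - a) (word_code e w) \<and>
                          awc c (posf K (int_encode j) - b) (word_code e v))))"
    by (rule forall_codes[OF inj fin]) (simp add: aw_awc[OF inj])
  finally show ?thesis unfolding n_def .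
qed

lemma partition_iff:
  assumes sub: "\<And>p. C p \<subseteq> \<Omega>" "D \<subseteq> \<Omega>"
  shows "(disjoint_family_on C S \<and> (\<Union>p\<in>S. C p) = D) \<longleftrightarrow>
     (\<forall>\<omega>\<in>\<Omega>. (\<forall>p1\<in>S. \<forall>p2\<in>S. p1 \<noteq> p2 \<longrightarrow> \<not> (\<omega> \<in> C p1 \<and> \<omega> \<in> C p2)) \<and>
        (\<forall>p\<in>S. \<omega> \<in> C p \<longrightarrow> \<omega> \<in> D) \<and> (\<omega> \<in> D \<longrightarrow> (\<exists>p\<in>S. \<omega> \<in> C p)))"
proof -
  have d: "disjoint_family_on C S \<longleftrightarrow> (\<forall>\<omega>\<in>\<Omega>. \<forall>p1\<in>S. \<forall>p2\<in>S. p1 \<noteq> p2 \<longrightarrow> \<not> (\<omega> \<in> C p1 \<and> \<omega> \<in> C p2))"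
  proof
    assume "disjoint_family_on C S" then show "\<forall>\<omega>\<in>\<Omega>. \<forall>p1\<in>S. \<forall>p2\<in>S. p1 \<noteq> p2 \<longrightarrow> \<not> (\<omega> \<in> C p1 \<and> \<omega> \<in> C p2)"
      unfolding disjoint_family_on_def by blast
  next
    assume h: "\<forall>\<omega>\<in>\<Omega>. \<forall>p1\<in>S. \<forall>p2\<in>S. p1 \<noteq> p2 \<longrightarrow> \<not> (\<omega> \<in> C p1 \<and> \<omega> \<in> C p2)"
    show "disjoint_family_on C S" unfolding disjoint_family_on_def
    proof (intro ballI impI)
      fix m n assume "m \<in> S" "n \<in> S" "m \<noteq> n"
      then show "C m \<inter> C n = {}" using h sub(1)[of m] by blast
    qed
  qed
  have u: "(\<Union>p\<in>S. C p) = D \<longleftrightarrow> (\<forall>\<omega>\<in>\<Omega>. (\<forall>p\<in>S. \<omega> \<in> C p \<longrightarrow> \<omega> \<in> D) \<and> (\<omega> \<in> D \<longrightarrow> (\<exists>p\<in>S. \<omega> \<in> C p)))"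
  proof
    assume "(\<Union>p\<in>S. C p) = D" then show "\<forall>\<omega>\<in>\<Omega>. (\<forall>p\<in>S. \<omega> \<in> C p \<longrightarrow> \<omega> \<in> D) \<and> (\<omega> \<in> D \<longrightarrow> (\<exists>p\<in>S. \<omega> \<in> C p))"
      by blast
  next
    assume h: "\<forall>\<omega>\<in>\<Omega>. (\<forall>p\<in>S. \<omega> \<in> C p \<longrightarrow> \<omega> \<in> D) \<and> (\<omega> \<in> D \<longrightarrow> (\<exists>p\<in>S. \<omega> \<in> C p))"
    show "(\<Union>p\<in>S. C p) = D"
    proof
      show "(\<Union>p\<in>S. C p) \<subseteq> D" using h sub(1) by blast
      show "D \<subseteq> (\<Union>p\<in>S. C p)" using h sub(2) by blast
    qed
  qed
  show ?thesis unfolding d u ball_conj_distrib by (rule refl)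
qed

lemma pair_code_inj: "inj e \<Longrightarrow> pair_code e p = pair_code e q \<Longrightarrow> p = q"
  by (cases p, cases q) (auto simp: pair_code_def word_code_def list_encode_eq inj_map_eq_map int_encode_eq)

lemma pd_pair_code: "prod_decode (pair_code e p) = (word_code e (fst p), int_encode (snd p))"
  by (simp add: pair_code_def)

lemma SD_eq: "finite S \<Longrightarrow> set_decode (fset_code e S) = pair_code e ` S"
  by (simp add: fset_code_def)

lemma pc_lt: "finite S \<Longrightarrow> p \<in> S \<Longrightarrow> pair_code e p < fset_code e S"
  using set_decode_less[of "pair_code e p" "fset_code e S"] SD_eq[of S e] by blast

lemma SD_all: assumes "finite S"
  shows "(\<forall>y<fset_code e S. y \<in> set_decode (fset_code e S) \<longrightarrow> Q y) \<longleftrightarrow> (\<forall>p\<in>S. Q (pair_code e p))"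
proof
  assume h: "\<forall>y<fset_code e S. y \<in> set_decode (fset_code e S) \<longrightarrow> Q y"
  show "\<forall>p\<in>S. Q (pair_code e p)"
  proof
    fix p assume p: "p \<in> S"
    then have "pair_code e p \<in> set_decode (fset_code e S)" using SD_eq[OF assms] by blast
    then show "Q (pair_code e p)" using h pc_lt[OF assms p] by blast
  qed
next
  assume h: "\<forall>p\<in>S. Q (pair_code e p)"
  show "\<forall>y<fset_code e S. y \<in> set_decode (fset_code e S) \<longrightarrow> Q y"
    using h SD_eq[OF assms] by auto
qed

lemma SD_ex: assumes "finite S"
  shows "(\<exists>y<fset_code e S. y \<in> set_decode (fset_code e S) \<and> Q y) \<longleftrightarrow> (\<exists>p\<in>S. Q (pair_code e p))"
proof
  assume "\<exists>y<fset_code e S. y \<in> set_decode (fset_code e S) \<and> Q y"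
  then show "\<exists>p\<in>S. Q (pair_code e p)" using SD_eq[OF assms] by auto
next
  assume "\<exists>p\<in>S. Q (pair_code e p)"
  then obtain p where p: "p \<in> S" "Q (pair_code e p)" by blast
  then have "pair_code e p \<in> set_decode (fset_code e S)" using SD_eq[OF assms] by blast
  then show "\<exists>y<fset_code e S. y \<in> set_decode (fset_code e S) \<and> Q y" using p pc_lt[OF assms p(1)] by blast
qed

lemma SD_all2: assumes "finite S" "inj e"
  shows "(\<forall>y1<fset_code e S. \<forall>y2<fset_code e S. y1 \<in> set_decode (fset_code e S) \<and> y2 \<in> set_decode (fset_code e S) \<and> y1 \<noteq> y2 \<longrightarrow> R y1 y2)
     \<longleftrightarrow> (\<forall>p1\<in>S. \<forall>p2\<in>S. p1 \<noteq> p2 \<longrightarrow> R (pair_code e p1) (pair_code e p2))"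
proof
  assume h: "\<forall>y1<fset_code e S. \<forall>y2<fset_code e S. y1 \<in> set_decode (fset_code e S) \<and> y2 \<in> set_decode (fset_code e S) \<and> y1 \<noteq> y2 \<longrightarrow> R y1 y2"
  show "\<forall>p1\<in>S. \<forall>p2\<in>S. p1 \<noteq> p2 \<longrightarrow> R (pair_code e p1) (pair_code e p2)"
  proof (intro ballI impI)
    fix p1 p2 assume p: "p1 \<in> S" "p2 \<in> S" "p1 \<noteq> p2"
    then have "pair_code e p1 \<noteq> pair_code e p2" using pair_code_inj[OF assms(2)] by blast
    moreover have "pair_code e p1 \<in> set_decode (fset_code e S)" "pair_code e p2 \<in> set_decode (fset_code e S)"
      using SD_eq[OF assms(1)] p by blast+
    ultimately show "R (pair_code e p1) (pair_code e p2)" using h pc_lt[OF assms(1) p(1)] pc_lt[OF assms(1) p(2)] by blast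
  qed
next
  assume h: "\<forall>p1\<in>S. \<forall>p2\<in>S. p1 \<noteq> p2 \<longrightarrow> R (pair_code e p1) (pair_code e p2)"
  show "\<forall>y1<fset_code e S. \<forall>y2<fset_code e S. y1 \<in> set_decode (fset_code e S) \<and> y2 \<in> set_decode (fset_code e S) \<and> y1 \<noteq> y2 \<longrightarrow> R y1 y2"
    using h SD_eq[OF assms(1)] by auto
qed

lemma pc_bounds: assumes "finite S" "p \<in> S"
  shows "length (fst p) < fset_code e S" "\<bar>snd p\<bar> < int (fset_code e S)"
proof -
  have lt: "pair_code e p < fset_code e S"
    using set_decode_less SD_eq[OF assms(1)] assms(2) by blast
  have "length (fst p) \<le> word_code e (fst p)" by (rule wc_ge)
  also have "\<dots> \<le> pair_code e p" unfolding pair_code_def by (rule le_prod_encode_1)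
  finally show "length (fst p) < fset_code e S" using lt by simp
  have "\<bar>snd p\<bar> \<le> int (int_encode (snd p))" by (rule int_encode_ge)
  also have "int_encode (snd p) \<le> pair_code e p" unfolding pair_code_def by (rule le_prod_encode_2)
  then have "int (int_encode (snd p)) < int (fset_code e S)" using lt by simp
  finally show "\<bar>snd p\<bar> < int (fset_code e S)" .
qed

lemma wc_inj: assumes "inj e" shows "word_code e x = word_code e y \<longleftrightarrow> x = y"
  unfolding word_code_def list_encode_eq using inj_map_eq_map[OF assms] by blast

lemma Lc_wc: assumes "inj e" shows "Lc e L (word_code e x) \<longleftrightarrow> x \<in> L"
  unfolding Lc_def wc_inj[OF assms] by simp

lemma part3:
  fixes w :: "'a list" and i :: int and S :: "('a list \<times> int) set" and \<Omega> :: "(int \<Rightarrow> 'a) set"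
  assumes inj: "inj e" and fin: "finite (range e)" and TO: "T ` \<Omega> = \<Omega>" and finS: "finite S"
  defines "N \<equiv> fset_code e S"
  defines "K \<equiv> 2 * N + word_code e w + int_encode i + 1"
  shows "cylinder_partition \<Omega> S w i \<longleftrightarrow>
   (\<forall>y<N. y \<in> set_decode N \<longrightarrow> Lc e (Lang \<Omega>) (fst (prod_decode y))) \<and>
   (\<forall>c<Bd (Max (range e)) (2*K). lenc c = 2*K \<and> Lc e (Lang \<Omega>) c \<longrightarrow>
      (\<forall>y1<N. \<forall>y2<N. y1 \<in> set_decode N \<and> y2 \<in> set_decode N \<and> y1 \<noteq> y2 \<longrightarrow>
          \<not> (awc c (posf K (snd (prod_decode y1))) (fst (prod_decode y1)) \<and>
             awc c (posf K (snd (prod_decode y2))) (fst (prod_decode y2)))) \<and>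
      (\<forall>y<N. y \<in> set_decode N \<longrightarrow> (awc c (posf K (snd (prod_decode y))) (fst (prod_decode y)) \<longrightarrow>
          awc c (posf K (int_encode i)) (word_code e w))) \<and>
      (awc c (posf K (int_encode i)) (word_code e w) \<longrightarrow>
          (\<exists>y<N. y \<in> set_decode N \<and> awc c (posf K (snd (prod_decode y))) (fst (prod_decode y)))))"
proof -
  define P where "P = - int K"
  define n where "n = 2*K"
  define C where "C p = cyl \<Omega> (fst p) (snd p)" for p :: "'a list \<times> int"
  define d where "d p = posf K (int_encode (snd p))" for p :: "'a list \<times> int"
  define dw where "dw = posf K (int_encode i)"
  have bi: "\<bar>i\<bar> \<le> int (int_encode i)" by (rule int_encode_ge)
  have bw: "length w \<le> word_code e w" by (rule wc_ge)
  have cw: "\<omega> \<in> cyl \<Omega> w i \<longleftrightarrow> \<omega> \<in> \<Omega> \<and> aw (restr \<omega> P n) dw w" for \<omega>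
    using cyl_restr[of P i w n \<omega> \<Omega>] posf_nat[of i K] bi bw unfolding P_def n_def K_def dw_def by simp
  have cp: "\<omega> \<in> C p \<longleftrightarrow> \<omega> \<in> \<Omega> \<and> aw (restr \<omega> P n) (d p) (fst p)" if p: "p \<in> S" for \<omega> p
  proof -
    have b: "length (fst p) < N" "\<bar>snd p\<bar> < int N" using pc_bounds[OF finS p] unfolding N_def by auto
    show ?thesis
      using cyl_restr[of P "snd p" "fst p" n \<omega> \<Omega>] posf_nat[of "snd p" K] b unfolding P_def n_def K_def d_def C_def
      by simp
  qed
  have subC: "C p \<subseteq> \<Omega>" for p unfolding C_def cyl_def by auto
  have subw: "cyl \<Omega> w i \<subseteq> \<Omega>" unfolding cyl_def by auto
  define \<Psi> where "\<Psi> x \<longleftrightarrow> (\<forall>p1\<in>S. \<forall>p2\<in>S. p1 \<noteq> p2 \<longrightarrow> \<not> (aw x (d p1) (fst p1) \<and> aw x (d p2) (fst p2))) \<and>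
        (\<forall>p\<in>S. aw x (d p) (fst p) \<longrightarrow> aw x dw w) \<and> (aw x dw w \<longrightarrow> (\<exists>p\<in>S. aw x (d p) (fst p)))" for x
  have cp_iff: "cylinder_partition \<Omega> S w i \<longleftrightarrow> (\<forall>p\<in>S. fst p \<in> Lang \<Omega>) \<and>
       (disjoint_family_on C S \<and> (\<Union>p\<in>S. C p) = cyl \<Omega> w i)"
    unfolding cylinder_partition_def C_def using finS by (auto simp: case_prod_beta')
  have step: "(disjoint_family_on C S \<and> (\<Union>p\<in>S. C p) = cyl \<Omega> w i) \<longleftrightarrow> (\<forall>\<omega>\<in>\<Omega>. \<Psi> (restr \<omega> P n))"
  proof -
    have "(\<forall>p1\<in>S. \<forall>p2\<in>S. p1 \<noteq> p2 \<longrightarrow> \<not> (\<omega> \<in> C p1 \<and> \<omega> \<in> C p2)) \<and>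
        (\<forall>p\<in>S. \<omega> \<in> C p \<longrightarrow> \<omega> \<in> cyl \<Omega> w i) \<and> (\<omega> \<in> cyl \<Omega> w i \<longrightarrow> (\<exists>p\<in>S. \<omega> \<in> C p))
       \<longleftrightarrow> \<Psi> (restr \<omega> P n)" if "\<omega> \<in> \<Omega>" for \<omega>
      unfolding \<Psi>_def using cp cw that by auto
    then show ?thesis unfolding partition_iff[OF subC subw] by auto
  qed
  also have "\<dots> \<longleftrightarrow> (\<forall>x\<in>Lang \<Omega>. length x = n \<longrightarrow> \<Psi> x)"
    by (rule forall_words[OF TO]) (simp add: n_def K_def)
  also have "\<dots> \<longleftrightarrow> (\<forall>c<Bd (Max (range e)) n. lenc c = n \<and> Lc e (Lang \<Omega>) c \<longrightarrow>
      (\<forall>y1<N. \<forall>y2<N. y1 \<in> set_decode N \<and> y2 \<in> set_decode N \<and> y1 \<noteq> y2 \<longrightarrow>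
          \<not> (awc c (posf K (snd (prod_decode y1))) (fst (prod_decode y1)) \<and>
             awc c (posf K (snd (prod_decode y2))) (fst (prod_decode y2)))) \<and>
      (\<forall>y<N. y \<in> set_decode N \<longrightarrow> (awc c (posf K (snd (prod_decode y))) (fst (prod_decode y)) \<longrightarrow>
          awc c (posf K (int_encode i)) (word_code e w))) \<and>
      (awc c (posf K (int_encode i)) (word_code e w) \<longrightarrow>
          (\<exists>y<N. y \<in> set_decode N \<and> awc c (posf K (snd (prod_decode y))) (fst (prod_decode y)))))"
    by (rule forall_codes[OF inj fin])
       (simp only: N_def SD_all[OF finS] SD_ex[OF finS] SD_all2[OF finS inj] pd_pair_code fst_conv snd_conv
          aw_awc[OF inj] \<Psi>_def d_def dw_def)
  finally have main: "(disjoint_family_on C S \<and> (\<Union>p\<in>S. C p) = cyl \<Omega> w i) \<longleftrightarrow> (\<forall>c<Bd (Max (range e)) (2*K). lenc c = 2*K \<and> Lc e (Lang \<Omega>) c \<longrightarrow>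
      (\<forall>y1<N. \<forall>y2<N. y1 \<in> set_decode N \<and> y2 \<in> set_decode N \<and> y1 \<noteq> y2 \<longrightarrow>
          \<not> (awc c (posf K (snd (prod_decode y1))) (fst (prod_decode y1)) \<and>
             awc c (posf K (snd (prod_decode y2))) (fst (prod_decode y2)))) \<and>
      (\<forall>y<N. y \<in> set_decode N \<longrightarrow> (awc c (posf K (snd (prod_decode y))) (fst (prod_decode y)) \<longrightarrow>
          awc c (posf K (int_encode i)) (word_code e w))) \<and>
      (awc c (posf K (int_encode i)) (word_code e w) \<longrightarrow>
          (\<exists>y<N. y \<in> set_decode N \<and> awc c (posf K (snd (prod_decode y))) (fst (prod_decode y)))))"
    unfolding n_def .
  have first: "(\<forall>y<N. y \<in> set_decode N \<longrightarrow> Lc e (Lang \<Omega>) (fst (prod_decode y))) \<longleftrightarrow> (\<forall>p\<in>S. fst p \<in> Lang \<Omega>)"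
    unfolding N_def SD_all[OF finS] pd_pair_code fst_conv Lc_wc[OF inj] by (rule refl)
  show ?thesis unfolding cp_iff main first by (rule refl)
qed

lemma decides_from_cp: assumes "cp Q" "\<And>xs. xs \<in> D \<Longrightarrow> Q xs \<longleftrightarrow> P xs" shows "\<exists>f. decides f D P"
proof -
  from assms(1) obtain f where h: "\<forall>xs. eval f xs (if Q xs then 1 else 0)"
    unfolding cp_def computable_def by auto
  have "eval f xs (if P xs then 1 else 0)" if "xs \<in> D" for xs
    using h[rule_format, of xs] assms(2)[OF that] by simp
  then have "decides f D P" unfolding decides_def by blast
  then show ?thesis by blast
qed

lemma fset_code_inj: assumes "inj e" "finite S" "finite S'" "fset_code e S = fset_code e S'" shows "S = S'"
proof -
  have "pair_code e ` S = pair_code e ` S'"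
    using assms(4) set_encode_eq[of "pair_code e ` S" "pair_code e ` S'"] assms(2,3) unfolding fset_code_def by auto
  moreover have "inj (pair_code e)" using pair_code_inj[OF assms(1)] by (auto intro: injI)
  ultimately show ?thesis by (simp add: inj_image_eq_iff)
qed

theorem proposition3p4:
  fixes \<Omega> :: "(int \<Rightarrow> 'a::finite) set"
    and e :: "'a \<Rightarrow> nat"
  assumes enc: "inj e"
    and minimal: "minimal_subshift \<Omega>"
    and no_rep: "\<forall>w\<in>Lm \<Omega> 5. distinct w"
    and recursive: "\<exists>f. decides f {[word_code e w] | w. True}
                        (\<lambda>xs. \<exists>w. xs = [word_code e w] \<and> w \<in> Lang \<Omega>)"
  shows
    "(\<exists>f. decides f
         {[word_code e w, word_code e v, int_encode i, int_encode j] | w v i j.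
            w \<in> Lang \<Omega> \<and> v \<in> Lang \<Omega>}
         (\<lambda>xs. \<exists>w v i j. xs = [word_code e w, word_code e v, int_encode i, int_encode j]
                \<and> cyl \<Omega> v j \<subseteq> cyl \<Omega> w i))
   \<and> (\<exists>f. decides f
         {[word_code e w, word_code e v, int_encode i, int_encode j] | w v i j.
            w \<in> Lang \<Omega> \<and> v \<in> Lang \<Omega>}
         (\<lambda>xs. \<exists>w v i j. xs = [word_code e w, word_code e v, int_encode i, int_encode j]
                \<and> three_disjoint (cyl \<Omega> w i) (cyl \<Omega> v j)))
   \<and> (\<forall>w\<in>Lang \<Omega>. \<forall>i::int. \<exists>f. decides f
         {[fset_code e S] | S. finite S \<and> (\<forall>(s,k)\<in>S. s \<noteq> [])}
         (\<lambda>xs. \<exists>S. xs = [fset_code e S] \<and> finite S \<and> (\<forall>(s,k)\<in>S. s \<noteq> [])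
                \<and> cylinder_partition \<Omega> S w i))"
proof -
  from recursive obtain f where f: "decides f {[word_code e w] | w. True}
                        (\<lambda>xs. \<exists>w. xs = [word_code e w] \<and> w \<in> Lang \<Omega>)" by blast
  have TO: "T ` \<Omega> = \<Omega>" using minimal unfolding minimal_subshift_def by blast
  have fin: "finite (range e)" by simp
  note cL = cp_Lc[OF enc fin f]
  note ci = c_intros2 cp_awc c_posf c_Bd cL c_lenc c_fstd c_sndd cp_memb
  let ?M = "Max (range e)"
  have weq: "word_code e a = word_code e b \<longleftrightarrow> a = b" for a b by (rule wc_inj[OF enc])
  have ieq: "int_encode a = int_encode b \<longleftrightarrow> a = b" for a b by (rule int_encode_eq)
  have P1: "\<exists>f. decides f
         {[word_code e w, word_code e v, int_encode i, int_encode j] | w v i j.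
            w \<in> Lang \<Omega> \<and> v \<in> Lang \<Omega>}
         (\<lambda>xs. \<exists>w v i j. xs = [word_code e w, word_code e v, int_encode i, int_encode j]
                \<and> cyl \<Omega> v j \<subseteq> cyl \<Omega> w i)"
  proof (rule decides_from_cp)
    show "cp (\<lambda>xs. \<forall>c<Bd ?M (2*(arg xs 0 + arg xs 1 + arg xs 2 + arg xs 3 + 1)).
        lenc c = 2*(arg xs 0 + arg xs 1 + arg xs 2 + arg xs 3 + 1) \<and> Lc e (Lang \<Omega>) c \<longrightarrow>
        awc c (posf (arg xs 0 + arg xs 1 + arg xs 2 + arg xs 3 + 1) (arg xs 3)) (arg xs 1) \<longrightarrow>
        awc c (posf (arg xs 0 + arg xs 1 + arg xs 2 + arg xs 3 + 1) (arg xs 2)) (arg xs 0))"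
      by (intro ci)
  next
    fix xs assume "xs \<in> {[word_code e w, word_code e v, int_encode i, int_encode j] | w v i j.
            w \<in> Lang \<Omega> \<and> v \<in> Lang \<Omega>}"
    then obtain w v i j where xs: "xs = [word_code e w, word_code e v, int_encode i, int_encode j]" by blast
    show "(\<forall>c<Bd ?M (2*(arg xs 0 + arg xs 1 + arg xs 2 + arg xs 3 + 1)).
        lenc c = 2*(arg xs 0 + arg xs 1 + arg xs 2 + arg xs 3 + 1) \<and> Lc e (Lang \<Omega>) c \<longrightarrow>
        awc c (posf (arg xs 0 + arg xs 1 + arg xs 2 + arg xs 3 + 1) (arg xs 3)) (arg xs 1) \<longrightarrow>
        awc c (posf (arg xs 0 + arg xs 1 + arg xs 2 + arg xs 3 + 1) (arg xs 2)) (arg xs 0)) \<longleftrightarrow>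
      (\<exists>w v i j. xs = [word_code e w, word_code e v, int_encode i, int_encode j]
                \<and> cyl \<Omega> v j \<subseteq> cyl \<Omega> w i)"
      unfolding xs using part1[OF enc fin TO, where w=w and v=v and i=i and j=j] by (simp add: arg_def numeral_eq_Suc weq ieq)
  qed
  have P2: "\<exists>f. decides f
         {[word_code e w, word_code e v, int_encode i, int_encode j] | w v i j.
            w \<in> Lang \<Omega> \<and> v \<in> Lang \<Omega>}
         (\<lambda>xs. \<exists>w v i j. xs = [word_code e w, word_code e v, int_encode i, int_encode j]
                \<and> three_disjoint (cyl \<Omega> w i) (cyl \<Omega> v j))"
  proof (rule decides_from_cp)
    show "cp (\<lambda>xs. \<forall>c<Bd ?M (2*(arg xs 0 + arg xs 1 + arg xs 2 + arg xs 3 + 3)).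
        lenc c = 2*(arg xs 0 + arg xs 1 + arg xs 2 + arg xs 3 + 3) \<and> Lc e (Lang \<Omega>) c \<longrightarrow>
        (\<forall>a<3. \<forall>b<3. \<not> (awc c (posf (arg xs 0 + arg xs 1 + arg xs 2 + arg xs 3 + 3) (arg xs 2) - a) (arg xs 0) \<and>
                          awc c (posf (arg xs 0 + arg xs 1 + arg xs 2 + arg xs 3 + 3) (arg xs 3) - b) (arg xs 1))))"
      by (intro ci)
  next
    fix xs assume "xs \<in> {[word_code e w, word_code e v, int_encode i, int_encode j] | w v i j.
            w \<in> Lang \<Omega> \<and> v \<in> Lang \<Omega>}"
    then obtain w v i j where xs: "xs = [word_code e w, word_code e v, int_encode i, int_encode j]" by blast
    show "(\<forall>c<Bd ?M (2*(arg xs 0 + arg xs 1 + arg xs 2 + arg xs 3 + 3)).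
        lenc c = 2*(arg xs 0 + arg xs 1 + arg xs 2 + arg xs 3 + 3) \<and> Lc e (Lang \<Omega>) c \<longrightarrow>
        (\<forall>a<3. \<forall>b<3. \<not> (awc c (posf (arg xs 0 + arg xs 1 + arg xs 2 + arg xs 3 + 3) (arg xs 2) - a) (arg xs 0) \<and>
                          awc c (posf (arg xs 0 + arg xs 1 + arg xs 2 + arg xs 3 + 3) (arg xs 3) - b) (arg xs 1)))) \<longleftrightarrow>
      (\<exists>w v i j. xs = [word_code e w, word_code e v, int_encode i, int_encode j]
                \<and> three_disjoint (cyl \<Omega> w i) (cyl \<Omega> v j))"
      unfolding xs using part2[OF enc fin TO, where w=w and v=v and i=i and j=j] by (simp add: arg_def numeral_eq_Suc weq ieq)
  qed
  have P3: "\<exists>f. decides f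
         {[fset_code e S] | S. finite S \<and> (\<forall>(s,k)\<in>S. s \<noteq> [])}
         (\<lambda>xs. \<exists>S. xs = [fset_code e S] \<and> finite S \<and> (\<forall>(s,k)\<in>S. s \<noteq> [])
                \<and> cylinder_partition \<Omega> S w i)" for w i
  proof -
    let ?W = "word_code e w" and ?I = "int_encode i"
    define Q3 where "Q3 xs \<longleftrightarrow> (\<forall>y<arg xs 0. y \<in> set_decode (arg xs 0) \<longrightarrow> Lc e (Lang \<Omega>) (fst (prod_decode y))) \<and>
   (\<forall>c<Bd ?M (2*(2 * arg xs 0 + ?W + ?I + 1)). lenc c = 2*(2 * arg xs 0 + ?W + ?I + 1) \<and> Lc e (Lang \<Omega>) c \<longrightarrow>
      (\<forall>y1<arg xs 0. \<forall>y2<arg xs 0. y1 \<in> set_decode (arg xs 0) \<and> y2 \<in> set_decode (arg xs 0) \<and> y1 \<noteq> y2 \<longrightarrow>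
          \<not> (awc c (posf (2 * arg xs 0 + ?W + ?I + 1) (snd (prod_decode y1))) (fst (prod_decode y1)) \<and>
             awc c (posf (2 * arg xs 0 + ?W + ?I + 1) (snd (prod_decode y2))) (fst (prod_decode y2)))) \<and>
      (\<forall>y<arg xs 0. y \<in> set_decode (arg xs 0) \<longrightarrow> (awc c (posf (2 * arg xs 0 + ?W + ?I + 1) (snd (prod_decode y))) (fst (prod_decode y)) \<longrightarrow>
          awc c (posf (2 * arg xs 0 + ?W + ?I + 1) ?I) ?W)) \<and>
      (awc c (posf (2 * arg xs 0 + ?W + ?I + 1) ?I) ?W \<longrightarrow>
          (\<exists>y<arg xs 0. y \<in> set_decode (arg xs 0) \<and> awc c (posf (2 * arg xs 0 + ?W + ?I + 1) (snd (prod_decode y))) (fst (prod_decode y)))))" for xs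
    show ?thesis
    proof (rule decides_from_cp[of Q3])
      show "cp Q3" unfolding Q3_def by (intro ci)
    next
      fix xs assume "xs \<in> {[fset_code e S] | S. finite S \<and> (\<forall>(s,k)\<in>S. s \<noteq> [])}"
      then obtain S where xs: "xs = [fset_code e S]" and S: "finite S" "\<forall>(s,k)\<in>S. s \<noteq> []" by blast
      have uq: "(\<exists>S'. [fset_code e S] = [fset_code e S'] \<and> finite S' \<and> (\<forall>(s,k)\<in>S'. s \<noteq> [])
                  \<and> cylinder_partition \<Omega> S' w i) \<longleftrightarrow> cylinder_partition \<Omega> S w i"
        using fset_code_inj[OF enc S(1)] S by auto
      show "Q3 xs \<longleftrightarrow> (\<exists>S'. xs = [fset_code e S'] \<and> finite S' \<and> (\<forall>(s,k)\<in>S'. s \<noteq> [])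
                  \<and> cylinder_partition \<Omega> S' w i)"
        unfolding xs uq Q3_def arg_Cons0 using part3[OF enc fin TO S(1), where w=w and i=i] by simp
    qed
  qed
  show ?thesis using P1 P2 P3 by blast
qed

end
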